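(* There exist constants $C,c>0$ such that for every $x\in\mathbb Z_{\ge0}$, all integers $0\le m<k\le n$ and every $u>0$, $$\mathbf P^n_x\Big(\sup_{m\le i\le k}|S_i-S_m|>u\Big)\le C\,e^{-cu^2/(k-m)}.$$ (In particular, with $m=0$, $\mathbf P^n_x(\sup_{0\le i\le k}|S_i-x|>u)\le Ce^{-cu^2/k}$; one can take $c=1/32$.)
   Context: $\mathbf P^n_x$ is the uniform probability measure on the finite set of paths $(s_0,\dots,s_n)\in\mathbb Z_{\ge0}^{n+1}$ with $s_0=x$ and $|s_{i+1}-s_i|=1$ for all $i$ (simple symmetric random walk conditioned to stay non-negative up to time $n$), and $S=(S_i)_{i=0}^n$ is its coordinate process. *)

theory Defs
  imports "HOL-Probability.Probability"
begin

text \<open>A path (s_0,...,s_n) is encoded as a function nat => int that is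
  extended by 0 beyond index n (so the set of encodings is in bijection
  with the paths).\<close>
definition nn_paths :: "nat \<Rightarrow> int \<Rightarrow> (nat \<Rightarrow> int) set" where
  "nn_paths n x = {s. s 0 = x \<and> (\<forall>i\<le>n. 0 \<le> s i)
      \<and> (\<forall>i<n. \<bar>s (Suc i) - s i\<bar> = 1) \<and> (\<forall>i>n. s i = 0)}"

definition Pnx :: "nat \<Rightarrow> int \<Rightarrow> (nat \<Rightarrow> int) pmf" where
  "Pnx n x = pmf_of_set (nn_paths n x)"

end

theory Submission imports Defs begin

fun bb :: "nat \<Rightarrow> int \<Rightarrow> nat" where
  "bb 0 d = (if d = 0 then 1 else 0)"
| "bb (Suc r) d = bb r (d - 1) + bb r (d + 1)"

lemma bb_sym: "bb r (-d) = bb r d"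
proof (induction r arbitrary: d)
  case 0 then show ?case by simp
next
  case (Suc r)
  have e: "-d - 1 = -(d+1)" "-d + 1 = -(d-1)" by simp_all
  have "bb (Suc r) (-d) = bb r (-(d+1)) + bb r (-(d-1))" by (simp only: bb.simps e)
  also have "\<dots> = bb r (d+1) + bb r (d-1)" by (simp only: Suc.IH)
  also have "\<dots> = bb (Suc r) d" by simp
  finally show ?case .
qed

lemma bb_dec: "0 \<le> d \<Longrightarrow> bb r (d + 2) \<le> bb r d"
proof (induction r arbitrary: d)
  case 0 then show ?case by simp
next
  case (Suc r)
  have "bb r (d + 3) \<le> bb r (d - 1)"
  proof (cases "d \<ge> 1")
    case True
    have "bb r ((d+1) + 2) \<le> bb r (d+1)" using Suc.IH[of "d+1"] True by simp
    moreover have "bb r ((d-1) + 2) \<le> bb r (d-1)" using Suc.IH[of "d-1"] True by simp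
    moreover have "(d+1)+2 = d + 3" "(d-1)+2 = d+1" by simp_all
    ultimately show ?thesis by (metis order_trans)
  next
    case False
    then have "d = 0" using Suc.prems by simp
    have "bb r 3 \<le> bb r 1" using Suc.IH[of 1] by simp
    moreover have "bb r (-1) = bb r 1" using bb_sym[of r 1] by simp
    ultimately show ?thesis using \<open>d = 0\<close> by simp
  qed
  then show ?case by (simp add: algebra_simps)
qed

primrec cntn :: "nat \<Rightarrow> nat \<Rightarrow> nat" where
  "cntn r 0 = bb r 0 + bb r 1"
| "cntn r (Suc z) = cntn r z + bb r (int z + 1) + bb r (int z + 2)"

lemma cntn_bound: "(z+1) * (bb r (int z + 1) + bb r (int z + 2)) \<le> cntn r z"
proof (induction z)
  case 0
  then show ?case using bb_dec[of 0 r] by simp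
next
  case (Suc z)
  have d: "bb r (int z + 3) \<le> bb r (int z + 1)" using bb_dec[of "int z + 1" r] by (simp add: add.assoc)
  have e: "int (Suc z) + 1 = int z + 2" "int (Suc z) + 2 = int z + 3" by simp_all
  have "(Suc z + 1) * (bb r (int (Suc z) + 1) + bb r (int (Suc z) + 2))
      = (z+1) * (bb r (int z + 2) + bb r (int z + 3)) + (bb r (int z + 2) + bb r (int z + 3))"
    unfolding e by (simp add: algebra_simps)
  also have "\<dots> \<le> (z+1) * (bb r (int z + 1) + bb r (int z + 2)) + (bb r (int z + 2) + bb r (int z + 3))"
  proof -
    have "(z+1) * (bb r (int z + 2) + bb r (int z + 3)) \<le> (z+1) * (bb r (int z + 1) + bb r (int z + 2))"
      using d by (intro mult_le_mono2) simp
    then show ?thesis by simp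
  qed
  also have "\<dots> \<le> cntn r (Suc z)" using Suc d by simp
  finally show ?case .
qed

lemma cntn_ratio: "(z+1) * cntn r (Suc z) \<le> (z+2) * cntn r z"
proof -
  have "(z+1) * cntn r (Suc z) = (z+1) * cntn r z + (z+1) * (bb r (int z + 1) + bb r (int z + 2))"
    by (simp add: algebra_simps)
  also have "(z+1) * (bb r (int z + 1) + bb r (int z + 2)) \<le> cntn r z"
    using cntn_bound[of z r] by (simp add: add.assoc)
  finally show ?thesis by simp
qed

lemma cntn_Suc_r: "cntn (Suc r) z = cntn r (Suc z) + (case z of 0 \<Rightarrow> 0 | Suc z' \<Rightarrow> cntn r z')"
proof (induction z)
  case 0
  have "bb r (-1) = bb r 1" using bb_sym[of r 1] by simp
  then show ?case by simp
next
  case (Suc z)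
  show ?case
  proof (cases z)
    case 0
    then show ?thesis using Suc by simp
  next
    case (Suc z')
    then show ?thesis using Suc.IH by (simp add: algebra_simps)
  qed
qed


definition pcons :: "int \<Rightarrow> (nat \<Rightarrow> int) \<Rightarrow> nat \<Rightarrow> int" where
  "pcons z t = (\<lambda>i. if i = 0 then z else t (i - 1))"
definition pshift :: "(nat \<Rightarrow> int) \<Rightarrow> nat \<Rightarrow> int" where
  "pshift s = (\<lambda>i. s (Suc i))"

lemma pshift_pcons[simp]: "pshift (pcons z t) = t"
  by (simp add: pshift_def pcons_def)

lemma inj_pcons: "inj (pcons z)"
  by (metis injI pshift_pcons)

lemma nn_paths_neg: "z < 0 \<Longrightarrow> nn_paths r z = {}"
  by (auto simp: nn_paths_def)

lemma nn_paths_0: "0 \<le> z \<Longrightarrow> nn_paths 0 z = {\<lambda>i. if i = 0 then z else 0}"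
  by (auto simp: nn_paths_def)

lemma nn_paths_Suc:
  assumes "0 \<le> z"
  shows "nn_paths (Suc r) z = pcons z ` (nn_paths r (z+1) \<union> nn_paths r (z-1))"
proof
  show "nn_paths (Suc r) z \<subseteq> pcons z ` (nn_paths r (z+1) \<union> nn_paths r (z-1))"
  proof
    fix s assume s: "s \<in> nn_paths (Suc r) z"
    have eq: "s = pcons z (pshift s)"
      using s by (auto simp: pcons_def pshift_def nn_paths_def fun_eq_iff split: if_splits)
    have "\<bar>s 1 - s 0\<bar> = 1" using s by (auto simp: nn_paths_def)
    then have "s 1 = z + 1 \<or> s 1 = z - 1" using s by (auto simp: nn_paths_def)
    moreover have "pshift s \<in> nn_paths r (s 1)"
      using s by (auto simp: nn_paths_def pshift_def)
    ultimately show "s \<in> pcons z ` (nn_paths r (z+1) \<union> nn_paths r (z-1))"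
      using eq by (metis UnI1 UnI2 image_eqI)
  qed
next
  show "pcons z ` (nn_paths r (z+1) \<union> nn_paths r (z-1)) \<subseteq> nn_paths (Suc r) z"
  proof
    fix s assume "s \<in> pcons z ` (nn_paths r (z+1) \<union> nn_paths r (z-1))"
    then obtain t where st: "s = pcons z t" and t: "t \<in> nn_paths r (z+1) \<or> t \<in> nn_paths r (z-1)" by blast
    have t0: "\<bar>t 0 - z\<bar> = 1" using t by (auto simp: nn_paths_def)
    have tn: "\<forall>i\<le>r. 0 \<le> t i" "\<forall>i<r. \<bar>t (Suc i) - t i\<bar> = 1" "\<forall>i>r. t i = 0"
      using t by (auto simp: nn_paths_def)
    show "s \<in> nn_paths (Suc r) z"
      unfolding nn_paths_def st pcons_def
    proof (intro CollectI conjI allI impI)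
      fix i assume "i \<le> Suc r" then show "0 \<le> (if i = 0 then z else t (i - 1))"
        using tn assms by auto
    next
      fix i assume i: "i < Suc r" show "\<bar>(if Suc i = 0 then z else t (Suc i - 1)) - (if i = 0 then z else t (i - 1))\<bar> = 1"
      proof (cases i)
        case 0 then show ?thesis using t0 by simp
      next
        case (Suc j) then show ?thesis using tn i by auto
      qed
    next
      fix i assume "Suc r < i" then show "(if i = 0 then z else t (i - 1)) = 0" using tn by auto
    qed simp
  qed
qed

lemma finite_nn: "finite (nn_paths r z)"
proof (induction r arbitrary: z)
  case 0 then show ?case by (cases "0 \<le> z") (simp_all add: nn_paths_0 nn_paths_neg)
next
  case (Suc r) then show ?case by (cases "0 \<le> z") (simp_all add: nn_paths_Suc nn_paths_neg)
qed

lemma card_step: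
  assumes "0 \<le> z"
  shows "card {s \<in> nn_paths (Suc r) z. R (pshift s)}
       = card {t \<in> nn_paths r (z+1). R t} + card {t \<in> nn_paths r (z-1). R t}"
proof -
  have "{s \<in> nn_paths (Suc r) z. R (pshift s)} = pcons z ` ({t \<in> nn_paths r (z+1). R t} \<union> {t \<in> nn_paths r (z-1). R t})"
  proof -
    have "{s \<in> pcons z ` X. R (pshift s)} = pcons z ` {t \<in> X. R t}" for X by auto
    moreover have "{t \<in> X \<union> Y. R t} = {t \<in> X. R t} \<union> {t \<in> Y. R t}" for X Y by auto
    ultimately show ?thesis unfolding nn_paths_Suc[OF assms] by simp
  qed
  also have "card \<dots> = card ({t \<in> nn_paths r (z+1). R t} \<union> {t \<in> nn_paths r (z-1). R t})"
    by (rule card_image) (meson inj_pcons inj_on_subset subset_UNIV)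
  also have "\<dots> = card {t \<in> nn_paths r (z+1). R t} + card {t \<in> nn_paths r (z-1). R t}"
  proof (rule card_Un_disjoint)
    show "finite {t \<in> nn_paths r (z+1). R t}" "finite {t \<in> nn_paths r (z-1). R t}"
      using finite_nn by simp_all
    show "{t \<in> nn_paths r (z+1). R t} \<inter> {t \<in> nn_paths r (z-1). R t} = {}"
      by (auto simp: nn_paths_def)
  qed
  finally show ?thesis .
qed

definition Nn :: "nat \<Rightarrow> int \<Rightarrow> nat" where "Nn r z = card (nn_paths r z)"

lemma Nn_Suc: "0 \<le> z \<Longrightarrow> Nn (Suc r) z = Nn r (z+1) + Nn r (z-1)"
  using card_step[of z r "\<lambda>_. True"] by (simp add: Nn_def)

lemma Nn_neg: "z < 0 \<Longrightarrow> Nn r z = 0"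
  by (simp add: Nn_def nn_paths_neg)

lemma cntn_0: "cntn 0 z = 1"
  by (induction z) auto

lemma Nn_cntn: "Nn r (int z) = cntn r z"
proof (induction r arbitrary: z)
  case 0 then show ?case by (simp add: Nn_def nn_paths_0 cntn_0)
next
  case (Suc r)
  have "Nn (Suc r) (int z) = Nn r (int (Suc z)) + Nn r (int z - 1)"
    by (simp add: Nn_Suc add.commute)
  also have "\<dots> = cntn (Suc r) z"
  proof (cases z)
    case 0 then show ?thesis using Suc.IH[of 1] bb_sym[of r 1] by (simp add: Nn_neg cntn_Suc_r)
  next
    case (Suc z') 
    then have "int z - 1 = int z'" by simp
    moreover have a: "Nn r (int (Suc z)) = cntn r (Suc z)" by (rule Suc.IH)
    moreover have b: "Nn r (int z') = cntn r z'" by (rule Suc.IH)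
    ultimately have "Nn r (int (Suc z)) + Nn r (int z - 1) = cntn r (Suc z) + cntn r z'"
      by (simp only:)
    then show ?thesis using \<open>z = Suc z'\<close> by (simp only: cntn_Suc_r nat.case)
  qed
  finally show ?case .
qed

lemma Nn_mono: "0 \<le> z \<Longrightarrow> Nn r z \<le> Nn r (z+1)"
proof -
  assume "0 \<le> z"
  then obtain n where "z = int n" by (metis nonneg_eq_int)
  then show ?thesis using Nn_cntn[of r n] Nn_cntn[of r "Suc n"] by (simp add: add.commute)
qed

lemma Nn_mono2: "0 \<le> z \<Longrightarrow> Nn r (z-1) \<le> Nn r (z+1)"
proof (cases "z = 0")
  case True then show ?thesis by (simp add: Nn_neg)
next
  case False
  assume "0 \<le> z"
  have "Nn r (z-1) \<le> Nn r (z - 1 + 1)" using Nn_mono[of "z-1" r] False \<open>0 \<le> z\<close> by simp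
  moreover have "Nn r z \<le> Nn r (z+1)" using Nn_mono \<open>0 \<le> z\<close> by simp
  ultimately show ?thesis by simp
qed

lemma Nn_ratio1: "0 \<le> z \<Longrightarrow> (z+1) * int (Nn r (z+1)) \<le> (z+2) * int (Nn r z)"
proof -
  assume "0 \<le> z"
  then obtain n where n: "z = int n" by (metis nonneg_eq_int)
  have "int ((n+1) * cntn r (Suc n)) \<le> int ((n+2) * cntn r n)"
    by (simp only: of_nat_le_iff cntn_ratio)
  then have h: "(int n+1) * int (cntn r (Suc n)) \<le> (int n + 2) * int (cntn r n)" by (simp add: algebra_simps del: cntn.simps)
  have e: "Nn r z = cntn r n" "Nn r (z+1) = cntn r (Suc n)" using n Nn_cntn[of r n] Nn_cntn[of r "Suc n"]
    by (simp_all add: add.commute del: cntn.simps)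
  show ?thesis unfolding e using h n by (simp add: algebra_simps del: cntn.simps)
qed

lemma Nn_ratio: "1 \<le> z \<Longrightarrow> z * int (Nn r (z+1)) \<le> (z+2) * int (Nn r (z-1))"
proof -
  assume z: "1 \<le> z"
  have a: "(z+1) * int (Nn r (z+1)) \<le> (z+2) * int (Nn r z)" using Nn_ratio1 z by simp
  have b: "z * int (Nn r z) \<le> (z+1) * int (Nn r (z-1))" using Nn_ratio1[of "z-1" r] z by (simp add: add.commute)
  have "(z+1) * (z * int (Nn r (z+1))) = z * ((z+1) * int (Nn r (z+1)))" by (simp add: algebra_simps)
  also have "\<dots> \<le> z * ((z+2) * int (Nn r z))" using a z by (intro mult_left_mono) simp_all
  also have "\<dots> = (z+2) * (z * int (Nn r z))" by (simp add: algebra_simps)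
  also have "\<dots> \<le> (z+2) * ((z+1) * int (Nn r (z-1)))" using b z by (intro mult_left_mono) simp_all
  also have "\<dots> = (z+1) * ((z+2) * int (Nn r (z-1)))" by (simp add: algebra_simps)
  finally show ?thesis using z by (simp add: mult_le_cancel_left)
qed

lemma Nn_pos: "0 \<le> z \<Longrightarrow> 0 < Nn r z"
proof (induction r arbitrary: z)
  case 0 then show ?case by (simp add: Nn_def nn_paths_0)
next
  case (Suc r) then show ?case using Nn_Suc[of z r] Suc.IH[of "z+1"] by simp
qed


lemma sinh_le_2u_cosh:
  fixes u :: real assumes "0 \<le> u" shows "sinh u \<le> 2 * u * cosh u"
proof (cases "u \<ge> 1")
  case True
  have "sinh u \<le> cosh u" by (rule sinh_le_cosh_real)
  also have "\<dots> \<le> 2 * u * cosh u"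
  proof -
    have h: "1 * cosh u \<le> u * cosh u" by (rule mult_right_mono) (use True in auto)
    have h1: "0 \<le> u * cosh u" using assms by simp
    have h2: "2 * u * cosh u = 2 * (u * cosh u)" by simp
    show ?thesis using h h1 h2 by linarith
  qed
  finally show ?thesis .
next
  case False
  have a: "exp u \<le> 1 + u + u\<^sup>2" using exp_bound[of u] assms False by simp
  have b: "1 - u \<le> exp (-u)" using exp_ge_add_one_self[of "-u"] by simp
  have "sinh u = (exp u - exp (-u)) / 2" by (simp add: sinh_field_def)
  also have "\<dots> \<le> (1 + u + u\<^sup>2 - (1 - u)) / 2" using a b by simp
  also have "\<dots> \<le> 2 * u" using assms False mult_right_mono[of u 2 u] by (simp add: power2_eq_square)
  also have "\<dots> \<le> 2 * u * cosh u" using mult_left_mono[OF cosh_real_ge_1[of u], of "2*u"] assms by simp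
  finally show ?thesis .
qed

lemma cosh_le_exp_sq:
  fixes l :: real assumes "0 \<le> l" shows "cosh l \<le> exp (l\<^sup>2)"
proof (cases "l \<ge> 1")
  case True
  have "exp (-l) \<le> exp l" using assms by simp
  then have "cosh l \<le> exp l" by (simp add: cosh_field_def)
  also have "\<dots> \<le> exp (l\<^sup>2)" using True by (simp add: power2_eq_square)
  finally show ?thesis .
next
  case False
  have a: "exp l \<le> 1 + l + l\<^sup>2" using exp_bound[of l] assms False by simp
  have p: "0 < 1 + l" using assms by simp
  have "exp (-l) = 1 / exp l" by (simp add: exp_minus field_simps)
  also have "\<dots> \<le> 1 / (1 + l)" using exp_ge_add_one_self[of l] p by (intro divide_left_mono) simp_all
  also have "\<dots> \<le> 1 - l + l\<^sup>2" using p assms by (simp add: field_simps power2_eq_square)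
  finally have b: "exp (-l) \<le> 1 - l + l\<^sup>2" .
  have "cosh l \<le> 1 + l\<^sup>2" using a b by (simp add: cosh_field_def)
  also have "\<dots> \<le> exp (l\<^sup>2)" using exp_ge_add_one_self[of "l\<^sup>2"] by simp
  finally show ?thesis .
qed

lemma ratio_ineq:
  fixes u v :: real assumes u: "0 < u" and v: "0 \<le> v"
  shows "sinh u * (u + v) \<le> 4 * (1 + v) * exp (-v) * u * sinh (u + v)"
proof -
  have c1: "1 \<le> 2 * exp (-v) * cosh v" by (simp add: cosh_field_def exp_minus field_simps)
  have e2: "1 + v \<le> exp (2 * v)" using exp_ge_add_one_self[of "2 * v"] v by linarith
  have c2: "v \<le> 2 * (1 + v) * exp (-v) * sinh v"
  proof -
    have E: "exp (2 * v) = exp v * exp v" by (metis mult_exp_exp mult_2)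
    have "2 * (1 + v) * exp (-v) * sinh v = (1 + v) * (1 - 1 / exp (2 * v))"
      unfolding E by (simp add: sinh_field_def exp_minus field_simps)
    moreover have "(1 + v) * (1 / exp (2 * v)) \<le> 1"
      using e2 by (simp add: field_simps)
    moreover have "(1+v)*(1 - 1/exp(2 * v)) = (1+v) - (1+v)*(1/exp(2 * v))" by (simp add: algebra_simps)
    ultimately show ?thesis by linarith
  qed
  have su: "0 \<le> sinh u" using u by simp
  have sv: "0 \<le> sinh v" using v by simp
  have s2: "sinh u \<le> 2 * u * cosh u" using sinh_le_2u_cosh u by simp
  have L: "sinh u * (u + v) = u * sinh u + v * sinh u" by (simp add: algebra_simps)
  have A: "u * sinh u \<le> 4 * (1 + v) * exp (-v) * u * (sinh u * cosh v)"
  proof -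
    have "u * sinh u \<le> u * sinh u * (2 * exp (-v) * cosh v) * 2 * (1 + v)"
    proof -
      have o: "1 \<le> (2 * exp (-v) * cosh v) * (2 * (1 + v))" using c1 v
        by (smt (verit) mult_le_cancel_left1 mult_nonneg_nonneg)
      show ?thesis using mult_left_mono[OF o, of "u * sinh u"] u su by (simp add: algebra_simps)
    qed
    then show ?thesis by (simp add: algebra_simps)
  qed
  have B: "v * sinh u \<le> 4 * (1 + v) * exp (-v) * u * (cosh u * sinh v)"
  proof -
    have "v * sinh u \<le> (2 * (1 + v) * exp (-v) * sinh v) * sinh u" using c2 su by (rule mult_right_mono)
    also have "\<dots> \<le> (2 * (1 + v) * exp (-v) * sinh v) * (2 * u * cosh u)"
      using s2 v sv by (intro mult_left_mono) simp_all
    finally show ?thesis by (simp add: algebra_simps)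
  qed
  have R: "4 * (1 + v) * exp (-v) * u * sinh (u + v) = 4 * (1 + v) * exp (-v) * u * (sinh u * cosh v) + 4 * (1 + v) * exp (-v) * u * (cosh u * sinh v)"
    by (simp add: sinh_add algebra_simps)
  show ?thesis using L A B R by linarith
qed


definition ff :: "real \<Rightarrow> real \<Rightarrow> real" where
  "ff l w = sinh (l * (w + 1)) / (w + 1)"

lemma sinh_rec: "sinh (x + l) + sinh (x - l) = 2 * cosh l * sinh (x::real)"
  by (simp add: sinh_add sinh_diff)

lemma G_step:
  fixes l :: real assumes l: "0 \<le> l"
  shows "sinh (l * (real n + 1)) \<le> (real n + 1) * (sinh (l * (real n + 2)) - sinh (l * (real n + 1)))"
proof (induction n)
  case 0
  have "sinh (l * 2) = 2 * sinh l * cosh l" using sinh_double[of l] by (simp add: mult.commute)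
  moreover have "sinh l \<le> sinh l * cosh l" using l cosh_real_ge_1[of l] mult_left_mono[of 1 "cosh l" "sinh l"] by simp
  ultimately show ?case by simp
next
  case (Suc n)
  let ?G = "\<lambda>k::real. sinh (l * (k + 1))"
  have rec: "?G (real n + 2) + ?G (real n) = 2 * cosh l * ?G (real n + 1)"
    using sinh_rec[of "l * (real n + 2)" l] by (simp add: algebra_simps)
  have pos: "0 \<le> ?G (real n + 1)" using l by simp
  have "?G (real n + 1) \<le> cosh l * ?G (real n + 1)" using pos cosh_real_ge_1[of l] mult_right_mono[of 1 "cosh l"] by simp
  then have d: "?G (real n + 1) - ?G (real n) \<le> ?G (real n + 2) - ?G (real n + 1)" using rec by linarith
  have IH: "?G (real n) \<le> (real n + 1) * (?G (real n + 1) - ?G (real n))" using Suc by (simp add: algebra_simps)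
  have "?G (real n + 1) \<le> (real n + 2) * (?G (real n + 1) - ?G (real n))" using IH by (simp add: algebra_simps)
  also have "\<dots> \<le> (real n + 2) * (?G (real n + 2) - ?G (real n + 1))" using d by (intro mult_left_mono) simp_all
  finally show ?case by (simp add: algebra_simps)
qed

lemma ff_Suc: assumes "0 \<le> l" shows "ff l (real n) \<le> ff l (real (Suc n))"
proof -
  have h: "sinh (l * (real n + 1)) * (real n + 2) \<le> sinh (l * (real n + 2)) * (real n + 1)"
    using G_step[OF assms, of n] by (simp add: algebra_simps)
  have "ff l (real n) = sinh (l * (real n + 1)) / (real n + 1)" by (simp add: ff_def)
  also have "\<dots> \<le> sinh (l * (real n + 2)) / (real n + 2)"
    using h by (simp add: field_simps)
  also have "\<dots> = ff l (real (Suc n))" by (simp add: ff_def add.commute)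
  finally show ?thesis .
qed

lemma ff_mono_nat: assumes "0 \<le> l" "m \<le> n" shows "ff l (real m) \<le> ff l (real n)"
  using lift_Suc_mono_le[of "\<lambda>k. ff l (real k)", OF ff_Suc[OF assms(1)] assms(2)] by simp

lemma ff_mono: assumes "0 \<le> l" "0 \<le> z" "z \<le> z'" shows "ff l (of_int z) \<le> ff l (of_int z')"
proof -
  obtain m where m: "z = int m" using assms by (metis nonneg_eq_int)
  obtain n where n: "z' = int n" using assms by (metis nonneg_eq_int order_trans)
  have "m \<le> n" using assms m n by simp
  then show ?thesis using ff_mono_nat[OF assms(1)] m n by simp
qed

lemma ff_pos: assumes "0 < l" "0 \<le> w" shows "0 < ff l w"
  using assms by (simp add: ff_def)

lemma up_ineq:
  fixes l A B :: real and z :: int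
  assumes l: "0 < l" and z: "1 \<le> z" and A: "0 \<le> A" and B: "0 \<le> B" and r: "z * A \<le> (z+2) * B"
  shows "A * ff l (z+1) + B * ff l (z-1) \<le> (A+B) * cosh l * ff l z"
proof -
  define g1 where "g1 = sinh (l * (z+2))"
  define g0 where "g0 = sinh (l * z)"
  define g where "g = sinh (l * (z+1))"
  have cg: "cosh l * g = (g1 + g0) / 2"
    using sinh_rec[of "l * (z+1)" l] unfolding g_def g1_def g0_def by (simp add: algebra_simps)
  have mono: "ff l (of_int (z-1)) \<le> ff l (of_int (z+1))" using ff_mono[of l "z-1" "z+1"] l z by simp
  have zr: "0 < real_of_int z" using z by simp
  have e1: "ff l (z+1) = g1 / (z+2)" by (simp add: ff_def g1_def algebra_simps)
  have e0: "ff l (z-1) = g0 / z" by (simp add: ff_def g0_def algebra_simps)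
  have e: "ff l z = g / (z+1)" by (simp add: ff_def g_def)
  have gm: "(z+2) * g0 \<le> z * g1" using mono zr unfolding e1 e0 by (simp add: field_simps)
  have P: "0 \<le> (z * g1 - (z+2) * g0) * ((z+2) * B - z * A)"
    using gm r by (intro mult_nonneg_nonneg) simp_all
  define x where "x = real_of_int z"
  have x: "0 < x" using zr x_def by simp
  have poly: "2*x*(x+1)*A*g1 + 2*(x+1)*(x+2)*B*g0 \<le> x*(x+2)*(A+B)*(g1+g0)"
  proof -
    have "x*(x+2)*(A+B)*(g1+g0) - (2*x*(x+1)*A*g1 + 2*(x+1)*(x+2)*B*g0)
        = (x * g1 - (x+2) * g0) * ((x+2) * B - x * A)" by (simp add: algebra_simps)
    moreover have "0 \<le> (x * g1 - (x+2) * g0) * ((x+2) * B - x * A)" using P unfolding x_def by simp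
    ultimately show ?thesis by linarith
  qed
  define D where "D = 2*x*(x+1)*(x+2)"
  have D: "0 < D" using x by (simp add: D_def)
  have nz: "x \<noteq> 0" "x + 1 \<noteq> 0" "x + 2 \<noteq> 0" using x by linarith+
  have e1': "ff l (z+1) = g1 / (x+2)" by (simp add: ff_def g1_def x_def algebra_simps)
  have e0': "ff l (z-1) = g0 / x" by (simp add: ff_def g0_def x_def algebra_simps)
  have e': "ff l z = g / (x+1)" by (simp add: ff_def g_def x_def)
  have l1: "D * (A * ff l (z+1) + B * ff l (z-1)) = 2*x*(x+1)*A*g1 + 2*(x+1)*(x+2)*B*g0"
  proof -
    have a1: "D * (A * (g1/(x+2))) = 2*x*(x+1)*A*g1" unfolding D_def using nz by (simp add: field_simps)
    have a2: "D * (B * (g0/x)) = 2*(x+1)*(x+2)*B*g0" unfolding D_def using nz by (simp add: field_simps)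
    show ?thesis unfolding e1' e0' distrib_left a1 a2 ..
  qed
  have l2: "D * ((A+B) * cosh l * ff l z) = x*(x+2)*(A+B)*(g1+g0)"
  proof -
    have "(A+B) * cosh l * ff l z = (A+B) * (cosh l * g) / (x+1)" unfolding e' by simp
    also have "\<dots> = (A+B) * (g1 + g0) / (2 * (x+1))" unfolding cg by simp
    finally have h: "(A+B) * cosh l * ff l z = (A+B) * (g1 + g0) / (2 * (x+1))" .
    show ?thesis unfolding h D_def using nz by (simp add: field_simps)
  qed
  have "D * (A * ff l (z+1) + B * ff l (z-1)) \<le> D * ((A+B) * cosh l * ff l z)"
    unfolding l1 l2 using poly .
  then show ?thesis using D by simp
qed

lemma up_ineq0:
  fixes l A :: real
  shows "A * ff l 1 \<le> A * cosh l * ff l 0"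
  using sinh_double[of l] by (simp add: ff_def mult.commute)

lemma down_ineq:
  fixes l A B w :: real
  assumes "0 \<le> l" "B \<le> A" "0 \<le> B"
  shows "A * exp (-l * (w+1)) + B * exp (-l * (w-1)) \<le> (A+B) * exp (-l * w) * cosh l"
proof -
  have x1: "exp (-l * (w+1)) = exp (-l*w) * exp (-l)" by (simp add: algebra_simps flip: exp_add)
  have x2: "exp (-l * (w-1)) = exp (-l*w) * exp l" by (simp add: algebra_simps flip: exp_add)
  have d: "0 \<le> (A - B) * (exp l - exp (-l))" using assms by (intro mult_nonneg_nonneg) simp_all
  have "(A+B) * exp (-l * w) * cosh l - (A * exp (-l * (w+1)) + B * exp (-l * (w-1)))
     = exp (-l*w) * ((A - B) * (exp l - exp (-l))) / 2"
    unfolding x1 x2 cosh_field_def by (simp add: field_simps)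
  moreover have "0 \<le> exp (-l*w) * ((A - B) * (exp l - exp (-l))) / 2" using d by simp
  ultimately show ?thesis by linarith
qed


definition Dn :: "nat \<Rightarrow> int \<Rightarrow> (nat \<Rightarrow> int) \<Rightarrow> bool" where
  "Dn j lv s = (\<exists>i\<le>j. s i \<le> lv)"
definition Up :: "nat \<Rightarrow> int \<Rightarrow> (nat \<Rightarrow> int) \<Rightarrow> bool" where
  "Up j lv s = (\<exists>i\<le>j. lv \<le> s i)"

lemma ex_le_Suc: "(\<exists>i\<le>Suc j. P i) = (P 0 \<or> (\<exists>i\<le>j. P (Suc i)))"
  by (metis Suc_le_mono le0 not0_implies_Suc)

lemma Dn_Suc: "Dn (Suc j) lv s = (s 0 \<le> lv \<or> Dn j lv (pshift s))"
  unfolding Dn_def pshift_def by (rule ex_le_Suc)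
lemma Up_Suc: "Up (Suc j) lv s = (lv \<le> s 0 \<or> Up j lv (pshift s))"
  unfolding Up_def pshift_def by (rule ex_le_Suc)
lemma Dn_0: "Dn 0 lv s = (s 0 \<le> lv)" by (simp add: Dn_def)
lemma Up_0: "Up 0 lv s = (lv \<le> s 0)" by (simp add: Up_def)

lemma card_sub_Nn: "card {s \<in> nn_paths r z. P s} \<le> Nn r z"
  unfolding Nn_def by (rule card_mono) (auto simp: finite_nn)

lemma nn_start: "s \<in> nn_paths r z \<Longrightarrow> s 0 = z" by (simp add: nn_paths_def)

lemma down_bound:
  fixes l :: real assumes l: "0 \<le> l"
  shows "j \<le> r \<Longrightarrow> real (card {s \<in> nn_paths r z. Dn j lv s})
           \<le> real (Nn r z) * exp (-l * (z - lv)) * cosh l ^ j"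
proof (induction j arbitrary: r z)
  case 0
  show ?case
  proof (cases "z \<le> lv")
    case True
    have "real (card {s \<in> nn_paths r z. Dn 0 lv s}) \<le> real (Nn r z)"
      using card_sub_Nn by simp
    also have "\<dots> \<le> real (Nn r z) * exp (-l * (z - lv))"
      using True l by (intro mult_le_cancel_left1[THEN iffD2] impI) (simp add: mult_nonneg_nonpos)
    finally show ?thesis by simp
  next
    case False
    then have e: "{s \<in> nn_paths r z. Dn 0 lv s} = {}" by (auto simp: Dn_0 dest: nn_start)
    show ?thesis unfolding e by simp
  qed
next
  case (Suc j)
  obtain r' where r: "r = Suc r'" "j \<le> r'" using Suc.prems by (cases r) auto
  have ge1: "1 \<le> exp (-l * (z - lv)) * cosh l ^ Suc j" if "z \<le> lv"
  proof -
    have "1 \<le> exp (-l * (z - lv))" using that l mult_nonneg_nonpos[of l "real_of_int z - real_of_int lv"] by simp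
    moreover have "1 \<le> cosh l ^ Suc j" by (rule one_le_power[OF cosh_real_ge_1])
    ultimately show ?thesis by (metis mult_mono' one_le_power le_numeral_extra(4) mult_1 zero_le_one order_trans) 
  qed
  show ?case
  proof (cases "z \<le> lv")
    case True
    have "real (card {s \<in> nn_paths r z. Dn (Suc j) lv s}) \<le> real (Nn r z)"
      using card_sub_Nn by simp
    also have "\<dots> \<le> real (Nn r z) * (exp (-l * (z - lv)) * cosh l ^ Suc j)"
      using mult_left_mono[OF ge1[OF True], of "real (Nn r z)"] by simp
    finally show ?thesis by (simp add: mult.assoc)
  next
    case False
    show ?thesis
    proof (cases "0 \<le> z")
      case False
      then show ?thesis by (simp add: nn_paths_neg Nn_neg)
    next
      case z: True
      have eq: "{s \<in> nn_paths r z. Dn (Suc j) lv s} = {s \<in> nn_paths (Suc r') z. Dn j lv (pshift s)}"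
        using False r by (auto simp: Dn_Suc dest: nn_start)
      define A where "A = real (Nn r' (z+1))"
      define B where "B = real (Nn r' (z-1))"
      have AB: "B \<le> A" "0 \<le> B" unfolding A_def B_def using Nn_mono2[OF z, of r'] by simp_all
      have NS: "real (Nn r z) = A + B" unfolding A_def B_def r using Nn_Suc[OF z] by simp
      have "real (card {s \<in> nn_paths r z. Dn (Suc j) lv s})
          = real (card {t \<in> nn_paths r' (z+1). Dn j lv t}) + real (card {t \<in> nn_paths r' (z-1). Dn j lv t})"
        unfolding eq card_step[OF z] by simp
      also have "\<dots> \<le> A * exp (-l * (real_of_int (z+1) - lv)) * cosh l ^ j + B * exp (-l * (real_of_int (z-1) - lv)) * cosh l ^ j"
      proof (rule add_mono)
        show "real (card {t \<in> nn_paths r' (z+1). Dn j lv t}) \<le> A * exp (-l * (real_of_int (z+1) - lv)) * cosh l ^ j"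
          unfolding A_def using Suc.IH[OF r(2), of "z+1"] by simp
        show "real (card {t \<in> nn_paths r' (z-1). Dn j lv t}) \<le> B * exp (-l * (real_of_int (z-1) - lv)) * cosh l ^ j"
          unfolding B_def using Suc.IH[OF r(2), of "z-1"] by simp
      qed
      also have "\<dots> = (A * exp (-l * ((z - lv) + 1)) + B * exp (-l * ((z - lv) - 1))) * cosh l ^ j"
        by (simp add: algebra_simps)
      also have "\<dots> \<le> ((A + B) * exp (-l * (z - lv)) * cosh l) * cosh l ^ j"
        using down_ineq[OF l AB] by (intro mult_right_mono) simp_all
      also have "\<dots> = real (Nn r z) * exp (-l * (z - lv)) * cosh l ^ Suc j"
        unfolding NS by simp
      finally show ?thesis .
    qed
  qed
qed

lemma up_bound:
  fixes l :: real assumes l: "0 < l" and lv: "0 \<le> lv"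
  shows "j \<le> r \<Longrightarrow> real (card {s \<in> nn_paths r z. Up j lv s})
           \<le> real (Nn r z) * (ff l z / ff l lv) * cosh l ^ j"
proof (induction j arbitrary: r z)
  case 0
  show ?case
  proof (cases "lv \<le> z")
    case True
    have "real (card {s \<in> nn_paths r z. Up 0 lv s}) \<le> real (Nn r z)"
      using card_sub_Nn by simp
    also have "\<dots> \<le> real (Nn r z) * (ff l z / ff l lv)"
      using ff_mono[of l lv z] ff_pos[of l lv] True l lv by (intro mult_le_cancel_left1[THEN iffD2] impI) simp
    finally show ?thesis by simp
  next
    case False
    then have e: "{s \<in> nn_paths r z. Up 0 lv s} = {}" by (auto simp: Up_0 dest: nn_start)
    have "0 \<le> real (Nn r z) * (ff l z / ff l lv) * cosh l ^ 0"
    proof (cases "0 \<le> z")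
      case True then show ?thesis using ff_pos[of l z] ff_pos[of l lv] l lv by simp
    next
      case False then show ?thesis by (simp add: Nn_neg)
    qed
    then show ?thesis unfolding e by simp
  qed
next
  case (Suc j)
  obtain r' where r: "r = Suc r'" "j \<le> r'" using Suc.prems by (cases r) auto
  show ?case
  proof (cases "lv \<le> z")
    case True
    have ge1: "1 \<le> (ff l z / ff l lv) * cosh l ^ Suc j"
    proof -
      have "1 \<le> ff l z / ff l lv" using ff_mono[of l lv z] ff_pos[of l lv] True l lv by simp
      moreover have "1 \<le> cosh l ^ Suc j" by (rule one_le_power[OF cosh_real_ge_1])
      ultimately show ?thesis by (metis mult_mono' one_le_power le_numeral_extra(4) mult_1 zero_le_one order_trans)
    qed
    have "real (card {s \<in> nn_paths r z. Up (Suc j) lv s}) \<le> real (Nn r z)"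
      using card_sub_Nn by simp
    also have "\<dots> \<le> real (Nn r z) * ((ff l z / ff l lv) * cosh l ^ Suc j)"
      using mult_left_mono[OF ge1, of "real (Nn r z)"] by simp
    finally show ?thesis by (simp add: mult.assoc)
  next
    case False
    show ?thesis
    proof (cases "0 \<le> z")
      case False
      then show ?thesis by (simp add: nn_paths_neg Nn_neg)
    next
      case z: True
      have eq: "{s \<in> nn_paths r z. Up (Suc j) lv s} = {s \<in> nn_paths (Suc r') z. Up j lv (pshift s)}"
        using False r by (auto simp: Up_Suc dest: nn_start)
      define A where "A = real (Nn r' (z+1))"
      define B where "B = real (Nn r' (z-1))"
      have NS: "real (Nn r z) = A + B" unfolding A_def B_def r using Nn_Suc[OF z] by simp
      have fl: "0 < ff l lv" using ff_pos l lv by simp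
      have key: "A * ff l (z+1) + B * ff l (z-1) \<le> (A+B) * cosh l * ff l z"
      proof (cases "z = 0")
        case True
        then have "B = 0" unfolding B_def by (simp add: Nn_neg)
        then show ?thesis using True up_ineq0[of A l] by simp
      next
        case False
        have r1: "z * int (Nn r' (z+1)) \<le> (z+2) * int (Nn r' (z-1))" using Nn_ratio[of z r'] False z by simp
        have "real_of_int (z * int (Nn r' (z+1))) \<le> real_of_int ((z+2) * int (Nn r' (z-1)))"
          using r1 by (simp only: of_int_le_iff)
        then have "z * A \<le> (z+2) * B" unfolding A_def B_def by simp
        then show ?thesis using up_ineq[of l z A B] l False z unfolding A_def B_def by simp
      qed
      have "real (card {s \<in> nn_paths r z. Up (Suc j) lv s})
          = real (card {t \<in> nn_paths r' (z+1). Up j lv t}) + real (card {t \<in> nn_paths r' (z-1). Up j lv t})"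
        unfolding eq card_step[OF z] by simp
      also have "\<dots> \<le> A * (ff l (real_of_int (z+1)) / ff l lv) * cosh l ^ j + B * (ff l (real_of_int (z-1)) / ff l lv) * cosh l ^ j"
      proof (rule add_mono)
        show "real (card {t \<in> nn_paths r' (z+1). Up j lv t}) \<le> A * (ff l (real_of_int (z+1)) / ff l lv) * cosh l ^ j"
          unfolding A_def using Suc.IH[OF r(2), of "z+1"] by simp
        show "real (card {t \<in> nn_paths r' (z-1). Up j lv t}) \<le> B * (ff l (real_of_int (z-1)) / ff l lv) * cosh l ^ j"
          unfolding B_def using Suc.IH[OF r(2), of "z-1"] by simp
      qed
      also have "\<dots> = (A * ff l (z+1) + B * ff l (z-1)) * (cosh l ^ j / ff l lv)"
        by (simp add: algebra_simps)
      also have "\<dots> \<le> ((A+B) * cosh l * ff l z) * (cosh l ^ j / ff l lv)"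
        using key fl by (intro mult_right_mono) simp_all
      also have "\<dots> = real (Nn r z) * (ff l z / ff l lv) * cosh l ^ Suc j"
        unfolding NS by (simp add: algebra_simps add_divide_distrib)
      finally show ?thesis .
    qed
  qed
qed


definition Ev :: "nat \<Rightarrow> real \<Rightarrow> (nat \<Rightarrow> int) \<Rightarrow> bool" where
  "Ev L u t = (\<exists>i\<le>L. real_of_int \<bar>t i - t 0\<bar> > u)"

lemma final_arith:
  fixes w :: real assumes "0 \<le> w"
  shows "(exp (-w) + 4 * (1 + w) * exp (-w)) * exp (w/2) \<le> 20 * exp (-w/4)"
proof -
  have "1 + w/4 \<le> exp (w/4)" by (rule exp_ge_add_one_self)
  then have "20 * (1 + w/4) \<le> 20 * exp (w/4)" by (rule mult_left_mono) simp
  moreover have "20 * (1 + w/4) = 20 + 5 * w" by simp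
  moreover have "5 * (1 + w) = 5 + 5 * w" by simp
  ultimately have a: "5 * (1 + w) \<le> 20 * exp (w/4)" by linarith
  have s1: "exp (-w) + 4 * (1 + w) * exp (-w) \<le> 5 * (1 + w) * exp (-w)" using assms by (simp add: algebra_simps)
  have ar: "-w + w/2 = -(w/4) + -(w/4)" by simp
  have s2: "exp (-w) * exp (w/2) = exp (-(w/4)) * exp (-(w/4))" by (simp only: mult_exp_exp ar)
  have ar2: "w/4 + -(w/4) = 0" by simp
  have s3: "exp (w/4) * exp (-(w/4)) = 1" by (simp only: mult_exp_exp ar2 exp_zero)
  have "(exp (-w) + 4 * (1 + w) * exp (-w)) * exp (w/2) \<le> (5 * (1 + w) * exp (-w)) * exp (w/2)"
    using s1 by (rule mult_right_mono) simp
  also have "\<dots> = (5 * (1 + w)) * (exp (-(w/4)) * exp (-(w/4)))"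
    using s2 by (simp add: mult.assoc)
  also have "(5 * (1 + w)) * (exp (-(w/4)) * exp (-(w/4))) \<le> (20 * exp (w/4)) * (exp (-(w/4)) * exp (-(w/4)))"
    using a by (intro mult_right_mono) simp_all
  also have "\<dots> = 20 * exp (-(w/4))" using s3 by (simp add: mult.assoc flip: mult.assoc[of "exp (w/4)"])
  finally show ?thesis by simp
qed

lemma start_bound:
  assumes z: "0 \<le> z" and L: "1 \<le> L" "L \<le> r" and u: "0 < u"
  shows "real (card {t \<in> nn_paths r z. Ev L u t}) \<le> 20 * exp (- u\<^sup>2 / (8 * L)) * real (Nn r z)"
proof -
  define a where "a = \<lfloor>u\<rfloor> + 1"
  have au: "u < real_of_int a" unfolding a_def by linarith
  have a1: "1 \<le> a" unfolding a_def using u by linarith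
  define l where "l = real_of_int a / (2 * L)"
  have l: "0 < l" unfolding l_def using a1 L by simp
  define N where "N = real (Nn r z)"
  have sub: "{t \<in> nn_paths r z. Ev L u t} \<subseteq> {t \<in> nn_paths r z. Dn L (z - a) t} \<union> {t \<in> nn_paths r z. Up L (z + a) t}"
  proof
    fix t assume t: "t \<in> {t \<in> nn_paths r z. Ev L u t}"
    then obtain i where i: "i \<le> L" "real_of_int \<bar>t i - t 0\<bar> > u" by (auto simp: Ev_def)
    have t0: "t 0 = z" using t nn_start by auto
    have "t i - z \<ge> a \<or> z - t i \<ge> a"
    proof (cases "t i \<ge> z")
      case True
      then have "real_of_int (t i - z) > u" using i t0 by simp
      then have "t i - z > \<lfloor>u\<rfloor>" by linarith
      then show ?thesis unfolding a_def by simp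
    next
      case False
      then have "real_of_int (z - t i) > u" using i t0 by simp
      then have "z - t i > \<lfloor>u\<rfloor>" by linarith
      then show ?thesis unfolding a_def by simp
    qed
    then show "t \<in> {t \<in> nn_paths r z. Dn L (z - a) t} \<union> {t \<in> nn_paths r z. Up L (z + a) t}"
      using t i by (auto simp: Dn_def Up_def)
  qed
  have fin: "finite {t \<in> nn_paths r z. Dn L (z - a) t}" "finite {t \<in> nn_paths r z. Up L (z + a) t}"
    using finite_nn by simp_all
  have "card {t \<in> nn_paths r z. Ev L u t} \<le> card ({t \<in> nn_paths r z. Dn L (z - a) t} \<union> {t \<in> nn_paths r z. Up L (z + a) t})"
    using sub fin by (intro card_mono) simp_all
  also have "\<dots> \<le> card {t \<in> nn_paths r z. Dn L (z - a) t} + card {t \<in> nn_paths r z. Up L (z + a) t}"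
    by (rule card_Un_le)
  finally have c: "real (card {t \<in> nn_paths r z. Ev L u t}) \<le> real (card {t \<in> nn_paths r z. Dn L (z - a) t}) + real (card {t \<in> nn_paths r z. Up L (z + a) t})"
    by linarith
  have cL: "cosh l ^ L \<le> exp (l\<^sup>2 * L)"
  proof -
    have "cosh l ^ L \<le> exp (l\<^sup>2) ^ L" using cosh_le_exp_sq[of l] l by (intro power_mono) simp_all
    also have "\<dots> = exp (l\<^sup>2 * L)" by (simp add: exp_of_nat_mult[symmetric] mult.commute)
    finally show ?thesis .
  qed
  define w where "w = l * a"
  have w0: "0 \<le> w" unfolding w_def using l a1 by simp
  have d: "real (card {t \<in> nn_paths r z. Dn L (z - a) t}) \<le> N * exp (-w) * cosh l ^ L"
    using down_bound[of l L r z "z - a"] l L unfolding N_def w_def by simp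
  have ratio: "ff l z / ff l (z + a) \<le> 4 * (1 + w) * exp (-w)"
  proof -
    define u' where "u' = l * (z + 1)"
    have u': "0 < u'" unfolding u'_def using l z by simp
    have ri: "sinh u' * (u' + w) \<le> 4 * (1 + w) * exp (-w) * u' * sinh (u' + w)"
      using ratio_ineq[OF u' w0] .
    have sp: "0 < sinh (u' + w)" using u' w0 by simp
    have zz: "0 < real_of_int z + 1" using z by simp
    have za: "0 < real_of_int z + real_of_int a + 1" using z a1 by simp
    have uw: "u' + w = l * (real_of_int z + real_of_int a + 1)" unfolding u'_def w_def by (simp add: algebra_simps)
    have fa: "ff l z = sinh u' / (real_of_int z + 1)" unfolding ff_def u'_def by simp
    have fb: "ff l (z + a) = sinh (u' + w) / (real_of_int z + real_of_int a + 1)" unfolding ff_def uw by simp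
    have "ff l z / ff l (z + a) = sinh u' * (real_of_int z + real_of_int a + 1) / ((real_of_int z + 1) * sinh (u' + w))"
      unfolding fa fb using zz za sp by (simp add: field_simps)
    also have "\<dots> = (l * (sinh u' * (real_of_int z + real_of_int a + 1))) / (l * ((real_of_int z + 1) * sinh (u' + w)))"
      using l by simp
    also have "\<dots> = sinh u' * (u' + w) / (u' * sinh (u' + w))"
    proof -
      have n1: "sinh u' * (u' + w) = l * (sinh u' * (real_of_int z + real_of_int a + 1))"
        by (subst uw) simp
      have n2: "u' * sinh (u' + w) = l * ((real_of_int z + 1) * sinh (u' + w))"
        unfolding u'_def by simp
      show ?thesis unfolding n1 n2 ..
    qed
    finally have "ff l z / ff l (z + a) = sinh u' * (u' + w) / (u' * sinh (u' + w))" .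
    also have "\<dots> \<le> 4 * (1 + w) * exp (-w)"
    proof -
      have den: "0 < u' * sinh (u' + w)" using u' sp by simp
      have ri': "sinh u' * (u' + w) \<le> (4 * (1 + w) * exp (-w)) * (u' * sinh (u' + w))"
        using ri by (simp add: ac_simps)
      show ?thesis using pos_divide_le_eq[OF den] ri' by simp
    qed
    finally show ?thesis .
  qed
  have up: "real (card {t \<in> nn_paths r z. Up L (z + a) t}) \<le> N * (4 * (1 + w) * exp (-w)) * cosh l ^ L"
  proof -
    have "real (card {t \<in> nn_paths r z. Up L (z + a) t}) \<le> N * (ff l z / ff l (z + a)) * cosh l ^ L"
      using up_bound[of l "z + a" L r z] l L z a1 unfolding N_def by simp
    also have "\<dots> \<le> N * (4 * (1 + w) * exp (-w)) * cosh l ^ L"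
      using ratio unfolding N_def by (intro mult_right_mono mult_left_mono) simp_all
    finally show ?thesis .
  qed
  have N0: "0 \<le> N" unfolding N_def by simp
  have "real (card {t \<in> nn_paths r z. Ev L u t}) \<le> N * ((exp (-w) + 4 * (1 + w) * exp (-w)) * cosh l ^ L)"
    using c d up by (simp add: algebra_simps)
  also have "\<dots> \<le> N * ((exp (-w) + 4 * (1 + w) * exp (-w)) * exp (w/2))"
  proof -
    have ee: "l\<^sup>2 * L = w / 2" unfolding w_def l_def using L by (simp add: power2_eq_square field_simps)
    have cL': "cosh l ^ L \<le> exp (w/2)" using cL by (simp only: ee)
    show ?thesis using cL' N0 w0 by (intro mult_left_mono) simp_all
  qed
  also have "\<dots> \<le> N * (20 * exp (-w/4))" using final_arith[OF w0] N0 by (intro mult_left_mono)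
  also have "\<dots> \<le> N * (20 * exp (- u\<^sup>2 / (8 * L)))"
  proof -
    have "w / 4 = (real_of_int a)\<^sup>2 / (8 * L)" unfolding w_def l_def using L by (simp add: power2_eq_square field_simps)
    moreover have "u\<^sup>2 \<le> (real_of_int a)\<^sup>2" using au u by (intro power_mono) simp_all
    ultimately have "- w / 4 \<le> - u\<^sup>2 / (8 * L)" using L by (simp add: divide_right_mono)
    then show ?thesis using N0 by (intro mult_left_mono) simp_all
  qed
  finally show ?thesis by (simp add: N_def mult.commute)
qed


definition pshiftn :: "nat \<Rightarrow> (nat \<Rightarrow> int) \<Rightarrow> nat \<Rightarrow> int" where
  "pshiftn m s = (\<lambda>i. s (i + m))"

lemma pshiftn_0[simp]: "pshiftn 0 s = s" by (simp add: pshiftn_def)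
lemma pshiftn_Suc: "pshiftn (Suc m) s = pshiftn m (pshift s)"
  by (simp add: pshiftn_def pshift_def)

lemma prefix_bound:
  assumes H: "\<And>z. real (card {t \<in> nn_paths r z. R t}) \<le> c * real (Nn r z)"
  shows "real (card {s \<in> nn_paths (m + r) x. R (pshiftn m s)}) \<le> c * real (Nn (m + r) x)"
proof (induction m arbitrary: x)
  case 0 then show ?case using H by simp
next
  case (Suc m)
  show ?case
  proof (cases "0 \<le> x")
    case False then show ?thesis by (simp add: nn_paths_neg Nn_neg)
  next
    case True
    have "real (card {s \<in> nn_paths (Suc m + r) x. R (pshiftn (Suc m) s)})
        = real (card {s \<in> nn_paths (Suc (m + r)) x. (\<lambda>t. R (pshiftn m t)) (pshift s)})"
      by (simp add: pshiftn_Suc)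
    also have "\<dots> = real (card {t \<in> nn_paths (m + r) (x+1). R (pshiftn m t)}) + real (card {t \<in> nn_paths (m + r) (x-1). R (pshiftn m t)})"
      using card_step[OF True, of "m + r" "\<lambda>t. R (pshiftn m t)"] by simp
    also have "\<dots> \<le> c * real (Nn (m + r) (x+1)) + c * real (Nn (m + r) (x-1))"
      using Suc.IH[of "x+1"] Suc.IH[of "x-1"] by (rule add_mono)
    also have "\<dots> = c * real (Nn (Suc m + r) x)"
      using Nn_Suc[OF True, of "m + r"] by (simp add: algebra_simps)
    finally show ?thesis .
  qed
qed

lemma max_gt_iff:
  fixes f :: "nat \<Rightarrow> int"
  assumes "m \<le> k"
  shows "(real_of_int (MAX i\<in>{m..k}. f i) > u) = (\<exists>i\<in>{m..k}. real_of_int (f i) > u)"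
proof
  assume "real_of_int (MAX i\<in>{m..k}. f i) > u"
  moreover have "(MAX i\<in>{m..k}. f i) \<in> f ` {m..k}" using assms by (intro Max_in) auto
  ultimately show "\<exists>i\<in>{m..k}. real_of_int (f i) > u" by auto
next
  assume "\<exists>i\<in>{m..k}. real_of_int (f i) > u"
  then obtain i where i: "i \<in> {m..k}" "real_of_int (f i) > u" by auto
  have "f i \<le> (MAX i\<in>{m..k}. f i)" using i by (intro Max_ge) auto
  then show "real_of_int (MAX i\<in>{m..k}. f i) > u" using i by linarith
qed

theorem theoremA8:
  shows "\<exists>C c :: real. C > 0 \<and> c > 0 \<and>
    (\<forall>(x::int) (n::nat) (m::nat) (k::nat) (u::real).
       0 \<le> x \<longrightarrow> m < k \<longrightarrow> k \<le> n \<longrightarrow> u > 0 \<longrightarrow>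
       measure_pmf.prob (Pnx n x)
         {s. real_of_int (MAX i\<in>{m..k}. \<bar>s i - s m\<bar>) > u}
       \<le> C * exp (- c * u\<^sup>2 / real (k - m)))"
proof (intro exI conjI allI impI)
  show "(20::real) > 0" "(1/8::real) > 0" by simp_all
  fix x :: int and n m k :: nat and u :: real
  assume x: "0 \<le> x" and mk: "m < k" and kn: "k \<le> n" and u: "u > 0"
  define L where "L = k - m"
  define r where "r = n - m"
  have L: "1 \<le> L" "L \<le> r" unfolding L_def r_def using mk kn by simp_all
  have n: "n = m + r" unfolding r_def using mk kn by simp
  define B where "B = 20 * exp (- u\<^sup>2 / (8 * real L))"
  have Hz: "real (card {t \<in> nn_paths r z. Ev L u t}) \<le> B * real (Nn r z)" for z
  proof (cases "0 \<le> z")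
    case True then show ?thesis using start_bound[OF True L u] unfolding B_def by simp
  next
    case False then show ?thesis by (simp add: nn_paths_neg Nn_neg)
  qed
  have set_eq: "nn_paths n x \<inter> {s. real_of_int (MAX i\<in>{m..k}. \<bar>s i - s m\<bar>) > u}
      = {s \<in> nn_paths (m + r) x. Ev L u (pshiftn m s)}"
  proof -
    have "real_of_int (MAX i\<in>{m..k}. \<bar>s i - s m\<bar>) > u \<longleftrightarrow> Ev L u (pshiftn m s)" for s
    proof -
      have "real_of_int (MAX i\<in>{m..k}. \<bar>s i - s m\<bar>) > u \<longleftrightarrow> (\<exists>i\<in>{m..k}. real_of_int \<bar>s i - s m\<bar> > u)"
        using max_gt_iff[where f="\<lambda>i. \<bar>s i - s m\<bar>" and m=m and k=k and u=u] mk by simp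
      also have "\<dots> \<longleftrightarrow> (\<exists>j\<le>L. real_of_int \<bar>s (j + m) - s m\<bar> > u)"
      proof
        assume "\<exists>i\<in>{m..k}. real_of_int \<bar>s i - s m\<bar> > u"
        then obtain i where "i \<in> {m..k}" "real_of_int \<bar>s i - s m\<bar> > u" by blast
        then show "\<exists>j\<le>L. real_of_int \<bar>s (j + m) - s m\<bar> > u"
          unfolding L_def by (intro exI[of _ "i - m"]) auto
      next
        assume "\<exists>j\<le>L. real_of_int \<bar>s (j + m) - s m\<bar> > u"
        then obtain j where "j \<le> L" "real_of_int \<bar>s (j + m) - s m\<bar> > u" by blast
        then show "\<exists>i\<in>{m..k}. real_of_int \<bar>s i - s m\<bar> > u"
          unfolding L_def using mk by (intro bexI[of _ "j + m"]) auto
      qed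
      also have "\<dots> \<longleftrightarrow> Ev L u (pshiftn m s)" by (simp add: Ev_def pshiftn_def)
      finally show ?thesis .
    qed
    then show ?thesis using n by auto
  qed
  have fin: "finite (nn_paths n x)" by (rule finite_nn)
  have Npos: "0 < Nn n x" using Nn_pos[OF x] .
  then have ne: "nn_paths n x \<noteq> {}" unfolding Nn_def by auto
  have "measure_pmf.prob (Pnx n x) {s. real_of_int (MAX i\<in>{m..k}. \<bar>s i - s m\<bar>) > u}
      = real (card {s \<in> nn_paths (m + r) x. Ev L u (pshiftn m s)}) / real (Nn n x)"
    unfolding Pnx_def measure_pmf_of_set[OF ne fin] set_eq Nn_def by simp
  also have "\<dots> \<le> B * real (Nn n x) / real (Nn n x)"
    using prefix_bound[of r "Ev L u" B m x, OF Hz] n Npos by (intro divide_right_mono) simp_all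
  also have "\<dots> = B" using Npos by simp
  also have "\<dots> = 20 * exp (- (1/8) * u\<^sup>2 / real (k - m))"
    unfolding B_def L_def by (simp add: field_simps)
  finally show "measure_pmf.prob (Pnx n x) {s. real_of_int (MAX i\<in>{m..k}. \<bar>s i - s m\<bar>) > u}
       \<le> 20 * exp (- (1/8) * u\<^sup>2 / real (k - m))" .
qed

end
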